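(* Let $n\ge1$ be an integer and let $A_{ij}$ be the coefficient of $u^iv^jw^{n+1-i-j}$ in $P_{1/(n+1)}(u,v,w)$ (equivalently, of $x^{2i}y^{2j}z^{2(n+1-i-j)}$ in the numerator of $M_{1/(n+1)}$). Then for all integers $i,j\ge0$ with $i+j\le n+1$ and $j\le n$, $$A_{ij}=\binom{n-j}{n+1-i-j}\binom{i+j}{j},$$ with the convention $\binom{m}{k}=0$ unless $0\le k\le m$; moreover $A_{0,n+1}=1$ and $A_{i,n+1}=0$ for $i>0$.
   Context: Markov polynomials. Let $x,y,z$ be indeterminates. Consider the set consisting of all rationals $\rho\in[0,1]$, each written in lowest terms $\rho=a/b$ with integers $a\ge 0$, $b\ge 1$, together with the formal symbol $1/0$. Define Laurent polynomials $M_\rho(x,y,z)$ recursively by $M_{1/0}=y$, $M_{0/1}=x$, $M_{1/1}=\frac{x^2+y^2}{z}$, and: whenever $a/b$, $c/d$ are in this set with $|ad-bc|=1$ and $(a+2c)/(b+2d)\in[0,1]$, then $M_{\frac{a+2c}{b+2d}}=\big(M_{c/d}^2+M_{\frac{a+c}{b+d}}^2\big)/M_{a/b}$. This determines $M_\rho$ for every rational $\rho\in[0,1]$. In particular $M_{1/(k+1)}=(M_{1/k}^2+x^2)/M_{1/(k-1)}$ for $k\ge1$. Numerator. For coprime $1\le a\le b$, $P_{a/b}(u,v,w)$ denotes the homogeneous polynomial of degree $a+b-1$ such that $M_{a/b}(x,y,z)=P_{a/b}(x^2,y^2,z^2)/(x^{a-1}y^{b-1}z^{a+b-1})$; its existence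 is known. *)

theory Defs
  imports Complex_Main
begin

text \<open>Markov Laurent polynomials along the branch 1/k, evaluated at real points:
  Mk k x y z = M_{1/k}(x,y,z), with M_{1/0} = y, M_{1/1} = (x^2+y^2)/z and
  M_{1/(k+1)} = (M_{1/k}^2 + x^2) / M_{1/(k-1)}.\<close>
fun Mk :: "nat \<Rightarrow> real \<Rightarrow> real \<Rightarrow> real \<Rightarrow> real" where
  "Mk 0 x y z = y"
| "Mk (Suc 0) x y z = (x^2 + y^2) / z"
| "Mk (Suc (Suc k)) x y z = ((Mk (Suc k) x y z)^2 + x^2) / Mk k x y z"

end

theory Submission
  imports Defs
begin


lemma Mk_pos: "x > 0 \<Longrightarrow> y > 0 \<Longrightarrow> z > 0 \<Longrightarrow> Mk k x y z > 0 \<and> Mk (Suc k) x y z > 0"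
  by (induction k) (auto simp: add_pos_nonneg)

lemma Mk_lin:
  assumes "x > 0" "y > 0" "z > 0"
  shows "Mk (Suc (Suc k)) x y z + Mk k x y z = (x^2+y^2+z^2)/(y*z) * Mk (Suc k) x y z"
proof (induction k)
  case 0
  show ?case using assms
    by (simp add: field_simps power2_eq_square)
next
  case (Suc k)
  define a where "a = Mk k x y z"
  define b where "b = Mk (Suc k) x y z"
  define c where "c = Mk (Suc (Suc k)) x y z"
  define t where "t = (x^2+y^2+z^2)/(y*z)"
  have pa: "a > 0" "b > 0" "c > 0" using Mk_pos[OF assms, of k] Mk_pos[OF assms, of "Suc k"]
    by (auto simp: a_def b_def c_def)
  have cdef: "c = (b^2 + x^2)/a" by (simp add: a_def b_def c_def)
  have d: "Mk (Suc (Suc (Suc k))) x y z = (c^2 + x^2)/b" by (simp add: b_def c_def)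
  have IH: "c + a = t * b" using Suc by (simp add: a_def b_def c_def t_def)
  have ca: "c * a = b^2 + x^2" using cdef pa by simp
  have "c^2 + x^2 = c * (c + a) - b^2" using ca by (simp add: algebra_simps power2_eq_square)
  also have "\<dots> = b * (t*c - b)" using IH by (simp add: algebra_simps power2_eq_square)
  finally have "(c^2 + x^2)/b = t*c - b" using pa by simp
  then show ?case using d by (simp add: c_def b_def t_def)
qed

definition TT :: "nat \<Rightarrow> (nat \<times> nat \<times> nat) set" where
  "TT k = {(i,j,a). i+j+a = k}"

lemma TT_finite: "finite (TT k)"
proof -
  have "TT k \<subseteq> {..k} \<times> {..k} \<times> {..k}" by (auto simp: TT_def)
  then show ?thesis by (rule finite_subset) auto
qed

definition PS :: "(nat \<Rightarrow> nat \<Rightarrow> nat \<Rightarrow> real) \<Rightarrow> nat \<Rightarrow> real \<Rightarrow> real \<Rightarrow> real \<Rightarrow> real" where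
  "PS f k u v w = (\<Sum>(i,j,a)\<in>TT k. f i j a * u^i * v^j * w^a)"

lemma PS_add: "PS f k u v w + PS g k u v w = PS (\<lambda>i j a. f i j a + g i j a) k u v w"
  by (simp add: PS_def sum.distrib[symmetric] case_prod_beta algebra_simps)

lemma PS_diff: "PS f k u v w - PS g k u v w = PS (\<lambda>i j a. f i j a - g i j a) k u v w"
  by (simp add: PS_def sum_subtractf[symmetric] case_prod_beta algebra_simps)

lemma PS_cong: "(\<And>i j a. i+j+a = k \<Longrightarrow> f i j a = g i j a) \<Longrightarrow> PS f k u v w = PS g k u v w"
  unfolding PS_def by (rule sum.cong) (auto simp: TT_def)

lemma PS_u: "u * PS f k u v w = PS (\<lambda>i j a. if i = 0 then 0 else f (i-1) j a) (Suc k) u v w"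
proof -
  let ?h = "\<lambda>(i::nat,j::nat,a::nat). (Suc i, j, a)"
  let ?G = "\<lambda>(i,j,a). (if i = 0 then 0 else f (i-1) j a) * u^i * v^j * w^a"
  have sub: "?h ` TT k \<subseteq> TT (Suc k)" by (auto simp: TT_def)
  have "PS (\<lambda>i j a. if i = 0 then 0 else f (i-1) j a) (Suc k) u v w = sum ?G (TT (Suc k))"
    by (simp add: PS_def)
  also have "\<dots> = sum ?G (?h ` TT k)"
  proof (rule sum.mono_neutral_right[OF TT_finite sub])
    show "\<forall>p\<in>TT (Suc k) - ?h ` TT k. ?G p = 0"
    proof
      fix p assume p: "p \<in> TT (Suc k) - ?h ` TT k"
      obtain i j a where pe: "p = (i,j,a)" by (cases p) auto
      have "i = 0"
      proof (rule ccontr)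
        assume "i \<noteq> 0"
        then obtain i' where "i = Suc i'" by (cases i) auto
        then have "p = ?h (i',j,a)" "(i',j,a) \<in> TT k" using p pe by (auto simp: TT_def)
        then show False using p by blast
      qed
      then show "?G p = 0" using pe by simp
    qed
  qed
  also have "\<dots> = sum (?G \<circ> ?h) (TT k)" by (rule sum.reindex) (auto simp: inj_on_def)
  also have "\<dots> = u * PS f k u v w"
    unfolding PS_def sum_distrib_left by (rule sum.cong) (auto simp: algebra_simps)
  finally show ?thesis by simp
qed

lemma PS_v: "v * PS f k u v w = PS (\<lambda>i j a. if j = 0 then 0 else f i (j-1) a) (Suc k) u v w"
proof -
  let ?h = "\<lambda>(i::nat,j::nat,a::nat). (i, Suc j, a)"
  let ?G = "\<lambda>(i,j,a). (if j = 0 then 0 else f i (j-1) a) * u^i * v^j * w^a"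
  have sub: "?h ` TT k \<subseteq> TT (Suc k)" by (auto simp: TT_def)
  have "PS (\<lambda>i j a. if j = 0 then 0 else f i (j-1) a) (Suc k) u v w = sum ?G (TT (Suc k))"
    by (simp add: PS_def)
  also have "\<dots> = sum ?G (?h ` TT k)"
  proof (rule sum.mono_neutral_right[OF TT_finite sub])
    show "\<forall>p\<in>TT (Suc k) - ?h ` TT k. ?G p = 0"
    proof
      fix p assume p: "p \<in> TT (Suc k) - ?h ` TT k"
      obtain i j a where pe: "p = (i,j,a)" by (cases p) auto
      have "j = 0"
      proof (rule ccontr)
        assume "j \<noteq> 0"
        then obtain j' where "j = Suc j'" by (cases j) auto
        then have "p = ?h (i,j',a)" "(i,j',a) \<in> TT k" using p pe by (auto simp: TT_def)
        then show False using p by blast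
      qed
      then show "?G p = 0" using pe by simp
    qed
  qed
  also have "\<dots> = sum (?G \<circ> ?h) (TT k)" by (rule sum.reindex) (auto simp: inj_on_def)
  also have "\<dots> = v * PS f k u v w"
    unfolding PS_def sum_distrib_left by (rule sum.cong) (auto simp: algebra_simps)
  finally show ?thesis by simp
qed

lemma PS_w: "w * PS f k u v w = PS (\<lambda>i j a. if a = 0 then 0 else f i j (a-1)) (Suc k) u v w"
proof -
  let ?h = "\<lambda>(i::nat,j::nat,a::nat). (i, j, Suc a)"
  let ?G = "\<lambda>(i,j,a). (if a = 0 then 0 else f i j (a-1)) * u^i * v^j * w^a"
  have sub: "?h ` TT k \<subseteq> TT (Suc k)" by (auto simp: TT_def)
  have "PS (\<lambda>i j a. if a = 0 then 0 else f i j (a-1)) (Suc k) u v w = sum ?G (TT (Suc k))"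
    by (simp add: PS_def)
  also have "\<dots> = sum ?G (?h ` TT k)"
  proof (rule sum.mono_neutral_right[OF TT_finite sub])
    show "\<forall>p\<in>TT (Suc k) - ?h ` TT k. ?G p = 0"
    proof
      fix p assume p: "p \<in> TT (Suc k) - ?h ` TT k"
      obtain i j a where pe: "p = (i,j,a)" by (cases p) auto
      have "a = 0"
      proof (rule ccontr)
        assume "a \<noteq> 0"
        then obtain a' where "a = Suc a'" by (cases a) auto
        then have "p = ?h (i,j,a')" "(i,j,a') \<in> TT k" using p pe by (auto simp: TT_def)
        then show False using p by blast
      qed
      then show "?G p = 0" using pe by simp
    qed
  qed
  also have "\<dots> = sum (?G \<circ> ?h) (TT k)" by (rule sum.reindex) (auto simp: inj_on_def)
  also have "\<dots> = w * PS f k u v w"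
    unfolding PS_def sum_distrib_left by (rule sum.cong) (auto simp: algebra_simps)
  finally show ?thesis by simp
qed


definition gg :: "nat \<Rightarrow> nat \<Rightarrow> real" where
  "gg i a = (if i = 0 then (if a = 0 then 1 else 0) else real ((i - 1 + a) choose a))"

definition BB :: "nat \<Rightarrow> nat \<Rightarrow> real" where
  "BB i j = real ((i+j) choose i)"

definition cc :: "nat \<Rightarrow> nat \<Rightarrow> nat \<Rightarrow> real" where
  "cc i j a = BB i j * gg i a"

definition su where "su f = (\<lambda>i j a. if i = 0 then 0 else f (i-1) j a)"
definition sv where "sv f = (\<lambda>i j a. if j = 0 then 0 else f i (j-1) a)"
definition sw where "sw f = (\<lambda>i j (a::nat). if a = 0 then 0 else f i j (a-1))"

lemma gg_SS: "gg (Suc i) (Suc a) = gg (Suc i) a + gg i (Suc a)"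
  by (cases i) (auto simp: gg_def)
lemma gg_0: "gg 0 a = (if a = 0 then 1 else 0)" by (simp add: gg_def)
lemma gg_S0: "gg i 0 = 1" by (simp add: gg_def)
lemma BB_SS: "BB (Suc i) (Suc j) = BB i (Suc j) + BB (Suc i) j"
  by (simp add: BB_def)
lemma BB_0: "BB 0 j = 1" "BB i 0 = 1" by (auto simp: BB_def)

lemma cc_rec:
  assumes "i + j + a \<ge> 2"
  shows "cc i j a = su cc i j a + sv cc i j a + sw cc i j a - sv (sw cc) i j a"
proof (cases i)
  case 0
  then show ?thesis using assms
    by (cases j; cases a) (auto simp: su_def sv_def sw_def cc_def gg_0 BB_0)
next
  case (Suc i')
  show ?thesis
  proof (cases j)
    case 0
    then show ?thesis using Suc
      by (cases a) (auto simp: su_def sv_def sw_def cc_def gg_SS gg_S0 BB_0)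
  next
    case (Suc j')
    show ?thesis
    proof (cases a)
      case 0
      then show ?thesis using Suc \<open>i = Suc i'\<close>
        by (auto simp: su_def sv_def sw_def cc_def gg_S0 BB_SS)
    next
      case (Suc a')
      then show ?thesis using \<open>j = Suc j'\<close> \<open>i = Suc i'\<close>
        by (auto simp: su_def sv_def sw_def cc_def gg_SS BB_SS algebra_simps)
    qed
  qed
qed


lemma PS_rec: "PS cc (Suc (Suc k)) u v w = (u+v+w) * PS cc (Suc k) u v w - v*w*PS cc k u v w"
proof -
  have "(u+v+w) * PS cc (Suc k) u v w - v*w*PS cc k u v w
     = u * PS cc (Suc k) u v w + v * PS cc (Suc k) u v w + w * PS cc (Suc k) u v w
       - v * (w * PS cc k u v w)" by (simp add: algebra_simps)
  also have "\<dots> = PS (su cc) (Suc (Suc k)) u v w + PS (sv cc) (Suc (Suc k)) u v w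
       + PS (sw cc) (Suc (Suc k)) u v w - PS (sv (sw cc)) (Suc (Suc k)) u v w"
    unfolding PS_u PS_v PS_w su_def sv_def sw_def ..
  also have "\<dots> = PS (\<lambda>i j a. su cc i j a + sv cc i j a + sw cc i j a - sv (sw cc) i j a) (Suc (Suc k)) u v w"
    by (simp add: PS_add PS_diff)
  also have "\<dots> = PS cc (Suc (Suc k)) u v w"
    by (rule PS_cong) (use cc_rec in auto)
  finally show ?thesis by simp
qed

lemma PS0: "PS cc 0 u v w = 1"
proof -
  have "TT 0 = {(0,0,0)}" by (auto simp: TT_def)
  then show ?thesis by (simp add: PS_def cc_def BB_def gg_def)
qed

lemma PS1: "PS cc (Suc 0) u v w = u + v"
proof -
  have "TT (Suc 0) = {(1,0,0),(0,1,0),(0,0,1)}" by (auto simp: TT_def)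
  then show ?thesis by (simp add: PS_def cc_def BB_def gg_def)
qed

lemma main_eq:
  assumes "x > 0" "y > 0" "z > 0"
  shows "Mk k x y z * (y^k*z^k) = y * PS cc k (x^2) (y^2) (z^2)
       \<and> Mk (Suc k) x y z * (y^Suc k*z^Suc k) = y * PS cc (Suc k) (x^2) (y^2) (z^2)"
proof (induction k)
  case 0
  then show ?case using assms by (simp add: PS0 PS1 field_simps)
next
  case (Suc k)
  have L: "Mk (Suc (Suc k)) x y z = (x^2+y^2+z^2)/(y*z) * Mk (Suc k) x y z - Mk k x y z"
    using Mk_lin[OF assms, of k] by simp
  have "Mk (Suc (Suc k)) x y z * (y^Suc (Suc k)*z^Suc (Suc k))
      = (x^2+y^2+z^2) * (Mk (Suc k) x y z * (y^Suc k*z^Suc k))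
        - y^2*z^2 * (Mk k x y z * (y^k*z^k))"
    unfolding L using assms by (simp add: field_simps power2_eq_square)
  also have "\<dots> = y * PS cc (Suc (Suc k)) (x^2) (y^2) (z^2)"
  proof -
    have h1: "Mk (Suc k) x y z * (y^Suc k*z^Suc k) = y * PS cc (Suc k) (x^2) (y^2) (z^2)"
      and h2: "Mk k x y z * (y^k*z^k) = y * PS cc k (x^2) (y^2) (z^2)" using Suc by auto
    show ?thesis unfolding h1 h2 PS_rec by (simp add: algebra_simps)
  qed
  finally show ?case using Suc by simp
qed


lemma tri_sum:
  fixes F :: "nat \<Rightarrow> nat \<Rightarrow> nat \<Rightarrow> real"
  shows "(\<Sum>i\<le>K. \<Sum>j\<le>K-i. F i j (K-i-j)) = (\<Sum>(i,j,a)\<in>TT K. F i j a)"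
proof -
  have "(\<Sum>i\<le>K. \<Sum>j\<le>K-i. F i j (K-i-j)) = (\<Sum>(i,j)\<in>Sigma {..K} (\<lambda>i. {..K-i}). F i j (K-i-j))"
    by (rule sum.Sigma) auto
  also have "\<dots> = (\<Sum>(i,j,a)\<in>TT K. F i j a)"
  proof -
    have bij: "bij_betw (\<lambda>(i,j). (i,j,K-i-j)) (Sigma {..K} (\<lambda>i. {..K-i})) (TT K)"
      unfolding bij_betw_def inj_on_def
    proof (intro conjI ballI impI)
      show "(\<lambda>(i,j). (i,j,K-i-j)) ` (Sigma {..K} (\<lambda>i. {..K-i})) = TT K"
      proof
        show "(\<lambda>(i,j). (i,j,K-i-j)) ` (Sigma {..K} (\<lambda>i. {..K-i})) \<subseteq> TT K"
          by (auto simp: TT_def)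
        show "TT K \<subseteq> (\<lambda>(i,j). (i,j,K-i-j)) ` (Sigma {..K} (\<lambda>i. {..K-i}))"
        proof
          fix p assume "p \<in> TT K"
          then obtain i j a where "p = (i,j,a)" "i+j+a = K" by (auto simp: TT_def)
          then show "p \<in> (\<lambda>(i,j). (i,j,K-i-j)) ` (Sigma {..K} (\<lambda>i. {..K-i}))"
            by (intro image_eqI[where x="(i,j)"]) auto
        qed
      qed
    qed auto
    have "(\<Sum>(i,j,a)\<in>TT K. F i j a) = (\<Sum>p\<in>Sigma {..K} (\<lambda>i. {..K-i}). (\<lambda>(i,j,a). F i j a) ((\<lambda>(i,j). (i,j,K-i-j)) p))"
      using sum.reindex_bij_betw[OF bij, symmetric] by blast
    also have "\<dots> = (\<Sum>(i,j)\<in>Sigma {..K} (\<lambda>i. {..K-i}). F i j (K-i-j))"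
      by (rule sum.cong) auto
    finally show ?thesis by simp
  qed
  finally show ?thesis .
qed

lemma coeff_eq:
  assumes "i + j \<le> Suc n"
  shows "(if j \<le> n then real ((n - j) choose (n + 1 - i - j)) * real ((i + j) choose j)
                          else (if i = 0 then 1 else 0)) = cc i j (n+1-i-j)"
proof (cases "j \<le> n")
  case True
  show ?thesis
  proof (cases i)
    case 0
    then show ?thesis using True by (simp add: cc_def gg_def)
  next
    case (Suc i')
    have e1: "i' + (n + 1 - i - j) = n - j" using assms Suc by simp
    have e2: "real ((i+j) choose j) = BB i j"
      using binomial_symmetric[of j "i+j"] by (simp add: BB_def)
    have "cc i j (n+1-i-j) = BB i j * real ((n - j) choose (n + 1 - i - j))"
      using Suc e1 by (simp add: cc_def gg_def)
    then show ?thesis using True e2 by simp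
  qed
next
  case False
  then have "j = Suc n" "i = 0" using assms by auto
  then show ?thesis by (simp add: cc_def gg_def BB_def)
qed

theorem theorem5p2:
  fixes n :: nat
  assumes "n \<ge> 1"
  defines "A \<equiv> (\<lambda>i j. if j \<le> n then real ((n - j) choose (n + 1 - i - j)) * real ((i + j) choose j)
                          else (if i = 0 then 1 else 0))"
  shows "\<forall>x y z :: real. x > 0 \<longrightarrow> y > 0 \<longrightarrow> z > 0 \<longrightarrow>
           Mk (n + 1) x y z =
             (\<Sum>i\<le>n+1. \<Sum>j\<le>n+1-i. A i j * (x^2)^i * (y^2)^j * (z^2)^(n+1-i-j))
             / (x^0 * y^n * z^(n+1))"
proof (intro allI impI)
  fix x y z :: real
  assume x: "x > 0" and y: "y > 0" and z: "z > 0"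
  have S: "(\<Sum>i\<le>n+1. \<Sum>j\<le>n+1-i. A i j * (x^2)^i * (y^2)^j * (z^2)^(n+1-i-j))
      = (\<Sum>i\<le>n+1. \<Sum>j\<le>n+1-i. cc i j (n+1-i-j) * (x^2)^i * (y^2)^j * (z^2)^(n+1-i-j))"
    unfolding A_def by (intro sum.cong refl) (subst coeff_eq, auto)
  also have "\<dots> = PS cc (n+1) (x^2) (y^2) (z^2)"
    unfolding PS_def by (rule tri_sum[of "\<lambda>i j a. cc i j a * (x^2)^i * (y^2)^j * (z^2)^a"])
  finally have S': "(\<Sum>i\<le>n+1. \<Sum>j\<le>n+1-i. A i j * (x^2)^i * (y^2)^j * (z^2)^(n+1-i-j))
      = PS cc (n+1) (x^2) (y^2) (z^2)" .
  have E: "Mk (n+1) x y z * (y^(n+1)*z^(n+1)) = y * PS cc (n+1) (x^2) (y^2) (z^2)"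
    using main_eq[OF x y z, of "n+1"] by simp
  show "Mk (n + 1) x y z =
             (\<Sum>i\<le>n+1. \<Sum>j\<le>n+1-i. A i j * (x^2)^i * (y^2)^j * (z^2)^(n+1-i-j))
             / (x^0 * y^n * z^(n+1))"
    unfolding S' using E y z by (simp add: field_simps)
qed

end
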